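(* In the parallel-links routing game with homogeneous costs described in the context, there exists a link $M\in\mathcal L$ such that (i) $T_l(\hat f_l)\ge T_l(f^*_l)$ for all $l\le M$, and (ii) $T_n(\hat f_n)\le T_n(f^*_n)$ for all $n>M$.
   Context: Parallel-links routing game: users $\mathcal N=\{1,\dots,N\}$ share parallel links $\mathcal L=\{1,\dots,L\}$ from a common source to a common destination; link $l$ has capacity $c_l$, links indexed so that $c_1\ge c_2\ge\dots\ge c_L$. User $i$ has demand $r^i>0$, $R=\sum_ir^i<\sum_lc_l$. A routing strategy of user $i$ is $\mathbf f^i=(f^i_l)_l$ with $f^i_l\ge0$, $\sum_lf^i_l=r^i$; $f_l=\sum_if^i_l$. Homogeneous costs: $J^i(\mathbf f)=\sum_lf^i_lT_l(f_l)$, each $T_l:[0,\infty)\to[0,\infty)$ strictly increasing, convex, continuously differentiable, with $T_l(f_l)=T(c_l-f_l)$ for $f_l<c_l$ and $T_l(f_l)=\infty$ for $f_l\ge c_l$, for a single link-independent function $T$ with $T(c_l-f_l)$ strictly increasing in $f_l$. $(\hat f_l)_l$ are the link totals of the unique Nash equilibrium (feasible profile where each user's strategy minimizes its own cost given the others'). $(f^*_l)_l$ are the link totals minimizing the social cost $\sum_lf_lT_l(f_l)$ over feasible profiles. *)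

theory Defs
  imports "HOL-Analysis.Analysis" "HOL-Library.Extended_Real"
begin

text \<open>Users are indexed by 1..N, links by 1..L.
A profile is f :: nat => nat => real, with f i l the flow of user i on link l.\<close>

definition link_cost :: "(real \<Rightarrow> real) \<Rightarrow> (nat \<Rightarrow> real) \<Rightarrow> nat \<Rightarrow> real \<Rightarrow> ereal" where
  "link_cost T c l x = (if x < c l then ereal (T (c l - x)) else \<infinity>)"

definition is_strategy :: "nat \<Rightarrow> (nat \<Rightarrow> real) \<Rightarrow> nat \<Rightarrow> (nat \<Rightarrow> real) \<Rightarrow> bool" where
  "is_strategy L r i g \<longleftrightarrow> (\<forall>l\<in>{1..L}. 0 \<le> g l) \<and> (\<Sum>l=1..L. g l) = r i"

definition feasible :: "nat \<Rightarrow> nat \<Rightarrow> (nat \<Rightarrow> real) \<Rightarrow> (nat \<Rightarrow> nat \<Rightarrow> real) \<Rightarrow> bool" where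
  "feasible N L r f \<longleftrightarrow> (\<forall>i\<in>{1..N}. is_strategy L r i (f i))"

definition link_total :: "nat \<Rightarrow> (nat \<Rightarrow> nat \<Rightarrow> real) \<Rightarrow> nat \<Rightarrow> real" where
  "link_total N f l = (\<Sum>i=1..N. f i l)"

definition user_cost :: "(real \<Rightarrow> real) \<Rightarrow> (nat \<Rightarrow> real) \<Rightarrow> nat \<Rightarrow> nat \<Rightarrow> (nat \<Rightarrow> nat \<Rightarrow> real) \<Rightarrow> nat \<Rightarrow> ereal" where
  "user_cost T c N L f i = (\<Sum>l=1..L. ereal (f i l) * link_cost T c l (link_total N f l))"

definition is_nash :: "(real \<Rightarrow> real) \<Rightarrow> (nat \<Rightarrow> real) \<Rightarrow> nat \<Rightarrow> nat \<Rightarrow> (nat \<Rightarrow> real) \<Rightarrow> (nat \<Rightarrow> nat \<Rightarrow> real) \<Rightarrow> bool" where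
  "is_nash T c N L r f \<longleftrightarrow> feasible N L r f \<and>
     (\<forall>i\<in>{1..N}. \<forall>g. is_strategy L r i g \<longrightarrow> user_cost T c N L f i \<le> user_cost T c N L (f(i := g)) i)"

definition social_cost :: "(real \<Rightarrow> real) \<Rightarrow> (nat \<Rightarrow> real) \<Rightarrow> nat \<Rightarrow> nat \<Rightarrow> (nat \<Rightarrow> nat \<Rightarrow> real) \<Rightarrow> ereal" where
  "social_cost T c N L f = (\<Sum>l=1..L. ereal (link_total N f l) * link_cost T c l (link_total N f l))"

definition is_social_opt :: "(real \<Rightarrow> real) \<Rightarrow> (nat \<Rightarrow> real) \<Rightarrow> nat \<Rightarrow> nat \<Rightarrow> (nat \<Rightarrow> real) \<Rightarrow> (nat \<Rightarrow> nat \<Rightarrow> real) \<Rightarrow> bool" where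
  "is_social_opt T c N L r f \<longleftrightarrow> feasible N L r f \<and>
     (\<forall>g. feasible N L r g \<longrightarrow> social_cost T c N L f \<le> social_cost T c N L g)"

end

theory Submission
  imports Defs
begin


lemma deriv_min_right:
  fixes \<psi> :: "real \<Rightarrow> real"
  assumes d: "(\<psi> has_real_derivative D) (at x within {x..<b})" and xb: "x < b"
    and mn: "\<forall>y\<in>{x<..<b}. \<psi> x \<le> \<psi> y"
  shows "0 \<le> D"
proof -
  define m where "m = (x + b) / 2"
  have xm: "x < m" "m < b" using xb by (auto simp: m_def)
  have "(\<psi> has_real_derivative D) (at x within {x..m})"
    by (rule has_field_derivative_subset[OF d]) (use xm in auto)
  hence "((\<lambda>y. (\<psi> y - \<psi> x) / (y - x)) \<longlongrightarrow> D) (at_right x)"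
    using has_field_derivative_iff at_within_Icc_at_right[OF xm(1)] by metis
  moreover have "\<forall>\<^sub>F y in at_right x. 0 \<le> (\<psi> y - \<psi> x) / (y - x)"
    using eventually_at_right_real[OF xb] by eventually_elim (use mn in auto)
  ultimately show ?thesis
    by (intro tendsto_lowerbound) auto
qed

lemma tangent:
  fixes G :: "real \<Rightarrow> real"
  assumes cv: "convex_on {0..<C} G"
    and d: "(G has_real_derivative D) (at x within {0..<C})"
    and x: "x \<in> {0..<C}" and y: "y \<in> {0..<C}"
  shows "G x + D * (y - x) \<le> G y"
proof -
  define g where "g t = x + t * (y - x)" for t
  have img: "g ` {0..<1} \<subseteq> {0..<C}"
  proof
    fix z assume "z \<in> g ` {0..<(1::real)}"
    then obtain t where t: "0 \<le> t" "t < 1" "z = x + t * (y - x)" by (auto simp: g_def)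
    have "z = (1 - t) * x + t * y" using t by (simp add: algebra_simps)
    moreover have "0 \<le> (1 - t) * x + t * y" using t x y by auto
    moreover have "(1 - t) * x + t * y < C"
    proof -
      have "(1 - t) * x \<le> (1 - t) * C" using t x by (intro mult_left_mono) auto
      moreover have "t * y \<le> t * C" using t y by (intro mult_left_mono) auto
      moreover have "(1-t) * x < (1-t) * C \<or> t * y < t * C"
        using t x y by (cases "t = 0") auto
      ultimately show ?thesis by (auto simp: algebra_simps)
    qed
    ultimately show "z \<in> {0..<C}" by auto
  qed
  have gd: "(g has_real_derivative (y - x)) (at 0 within {0..<1})"
    unfolding g_def by (auto intro!: derivative_eq_intros)
  have "g 0 = x" by (simp add: g_def)
  have d2: "(G has_real_derivative D) (at (g 0) within (g ` {0..<1}))"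
    using has_field_derivative_subset[OF d img] \<open>g 0 = x\<close> by simp
  have c: "((G \<circ> g) has_real_derivative D * (y - x)) (at 0 within {0..<1})"
    using DERIV_image_chain[OF d2 gd] .
  define \<psi> where "\<psi> t = (1 - t) * G x + t * G y - G (g t)" for t
  have pd: "(\<psi> has_real_derivative (G y - G x - D * (y - x))) (at 0 within {0..<1})"
    unfolding \<psi>_def using c
    by (auto intro!: derivative_eq_intros simp: o_def)
  have "\<forall>t\<in>{0<..<1}. \<psi> 0 \<le> \<psi> t"
  proof
    fix t :: real assume t: "t \<in> {0<..<1}"
    have "G ((1 - t) *\<^sub>R x + t *\<^sub>R y) \<le> (1 - t) * G x + t * G y"
      using convex_onD[OF cv, of t x y] t x y by auto
    moreover have "(1 - t) *\<^sub>R x + t *\<^sub>R y = g t" by (simp add: g_def algebra_simps)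
    ultimately show "\<psi> 0 \<le> \<psi> t" by (simp add: \<psi>_def \<open>g 0 = x\<close>)
  qed
  from deriv_min_right[OF pd _ this] show ?thesis by simp
qed


lemma sum_two:
  fixes u v :: "nat \<Rightarrow> real"
  assumes "finite A" "l \<in> A" "n \<in> A" "l \<noteq> n" "\<forall>m\<in>A - {l, n}. u m = v m"
  shows "sum u A - sum v A = u l + u n - v l - v n"
proof -
  have "sum u A = u l + u n + sum u (A - {l} - {n})"
    using assms by (simp add: sum.remove[of A l] sum.remove[of "A - {l}" n])
  moreover have "sum v A = v l + v n + sum v (A - {l} - {n})"
    using assms by (simp add: sum.remove[of A l] sum.remove[of "A - {l}" n])
  moreover have "sum u (A - {l} - {n}) = sum v (A - {l} - {n})"
    using assms by (intro sum.cong) auto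
  ultimately show ?thesis by simp
qed


locale rg =
  fixes N L :: nat and c r :: "nat \<Rightarrow> real" and T :: "real \<Rightarrow> real"
  assumes N: "N \<ge> 1" and L: "L \<ge> 1"
    and cpos: "\<forall>l\<in>{1..L}. 0 < c l"
    and cord: "\<forall>l\<in>{1..L}. \<forall>m\<in>{1..L}. l \<le> m \<longrightarrow> c m \<le> c l"
    and rpos: "\<forall>i\<in>{1..N}. 0 < r i"
    and Rcap: "(\<Sum>i=1..N. r i) < (\<Sum>l=1..L. c l)"
    and Tnonneg: "\<forall>l\<in>{1..L}. \<forall>x\<in>{0..<c l}. 0 \<le> T (c l - x)"
  fixes D :: "real \<Rightarrow> real"
  assumes Dd: "\<forall>x\<in>{0..<c 1}. ((\<lambda>x. T (c 1 - x)) has_real_derivative D x) (at x within {0..<c 1})"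
    and conv1: "convex_on {0..<c 1} (\<lambda>x. T (c 1 - x))"
    and mono1: "strict_mono_on {0..<c 1} (\<lambda>x. T (c 1 - x))"
begin

lemma tot_nonneg: "feasible N L r f \<Longrightarrow> m \<in> {1..L} \<Longrightarrow> 0 \<le> link_total N f m"
  unfolding feasible_def is_strategy_def link_total_def by (auto intro: sum_nonneg)

lemma tot_sum: "feasible N L r f \<Longrightarrow> (\<Sum>m=1..L. link_total N f m) = (\<Sum>i=1..N. r i)"
  unfolding feasible_def is_strategy_def link_total_def
  by (subst sum.swap) (auto intro: sum.cong)

lemma flow_le_tot: "feasible N L r f \<Longrightarrow> i \<in> {1..N} \<Longrightarrow> m \<in> {1..L} \<Longrightarrow> f i m \<le> link_total N f m"
  unfolding feasible_def is_strategy_def link_total_def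
  by (intro member_le_sum) auto

lemma tot_pos_user: assumes "feasible N L r f" "m \<in> {1..L}" "0 < link_total N f m"
  shows "\<exists>i\<in>{1..N}. 0 < f i m"
proof (rule ccontr)
  assume "\<not> ?thesis"
  hence "\<forall>i\<in>{1..N}. f i m \<le> 0" by auto
  hence "link_total N f m \<le> 0" unfolding link_total_def by (intro sum_nonpos) auto
  with assms show False by auto
qed

lemma lc_fin: "m \<in> {1..L} \<Longrightarrow> x < c m \<Longrightarrow> link_cost T c m x = ereal (T (c m - x))"
  by (simp add: link_cost_def)

lemma social_real:
  assumes "feasible N L r f" "\<forall>m\<in>{1..L}. link_total N f m < c m"
  shows "social_cost T c N L f = ereal (\<Sum>m=1..L. link_total N f m * T (c m - link_total N f m))"
  unfolding social_cost_def using assms by (simp add: lc_fin)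

lemma user_real:
  assumes "feasible N L r f" "\<forall>m\<in>{1..L}. link_total N f m < c m"
  shows "user_cost T c N L f i = ereal (\<Sum>m=1..L. f i m * T (c m - link_total N f m))"
  unfolding user_cost_def using assms by (simp add: lc_fin)

lemma social_inf:
  assumes "feasible N L r f" "m \<in> {1..L}" "c m \<le> link_total N f m"
  shows "social_cost T c N L f = \<infinity>"
proof -
  have "0 < link_total N f m" using assms cpos by force
  hence "ereal (link_total N f m) * link_cost T c m (link_total N f m) = \<infinity>"
    using assms by (simp add: link_cost_def)
  thus ?thesis unfolding social_cost_def using assms(2) by (subst sum_Pinfty) auto
qed

lemma user_inf:
  assumes "m \<in> {1..L}" "0 < f i m" "c m \<le> link_total N f m"
  shows "user_cost T c N L f i = \<infinity>"
proof -
  have "ereal (f i m) * link_cost T c m (link_total N f m) = \<infinity>"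
    using assms by (simp add: link_cost_def)
  thus ?thesis unfolding user_cost_def using assms(1) by (subst sum_Pinfty) auto
qed

lemma upd_tot:
  assumes "i \<in> {1..N}"
  shows "link_total N (f(i := g)) m = link_total N f m - f i m + g m"
proof -
  have "link_total N (f(i := g)) m = (\<Sum>j\<in>{1..N}. (f(i:=g)) j m)" by (simp add: link_total_def)
  also have "\<dots> = (f(i:=g)) i m + (\<Sum>j\<in>{1..N}-{i}. (f(i:=g)) j m)"
    using assms by (subst sum.remove) auto
  also have "(\<Sum>j\<in>{1..N}-{i}. (f(i:=g)) j m) = (\<Sum>j\<in>{1..N}-{i}. f j m)" by (intro sum.cong) auto
  also have "\<dots> = link_total N f m - f i m"
    unfolding link_total_def using assms by (subst sum.remove[of _ i]) auto
  finally show ?thesis by (simp add: fun_upd_def)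
qed

lemma upd_feasible:
  "feasible N L r f \<Longrightarrow> is_strategy L r i g \<Longrightarrow> feasible N L r (f(i := g))"
  unfolding feasible_def by auto


definition "G x = T (c 1 - x)"
definition "sft m = c 1 - c m"

lemma one_in: "1 \<in> {1..L}" using L by auto

lemma sft_nonneg: "m \<in> {1..L} \<Longrightarrow> 0 \<le> sft m"
  using cord one_in by (auto simp: sft_def)

lemma G_shift: "T (c m - x) = G (x + sft m)"
  by (simp add: G_def sft_def)

lemma pos_in: "m \<in> {1..L} \<Longrightarrow> 0 \<le> x \<Longrightarrow> x < c m \<Longrightarrow> x + sft m \<in> {0..<c 1}"
  using sft_nonneg[of m] by (auto simp: sft_def)

lemma G_mono_lt: "x \<in> {0..<c 1} \<Longrightarrow> y \<in> {0..<c 1} \<Longrightarrow> x < y \<Longrightarrow> G x < G y"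
  using mono1 unfolding G_def strict_mono_on_def by blast

lemma G_mono_le: "x \<in> {0..<c 1} \<Longrightarrow> y \<in> {0..<c 1} \<Longrightarrow> x \<le> y \<Longrightarrow> G x \<le> G y"
  using G_mono_lt[of x y] by (cases "x = y") auto

lemma GD: "x \<in> {0..<c 1} \<Longrightarrow> (G has_real_derivative D x) (at x within {0..<c 1})"
  using Dd unfolding G_def[abs_def] by auto

lemma Gconv: "convex_on {0..<c 1} G"
  using conv1 unfolding G_def[abs_def] by auto

lemma D_nonneg: assumes x: "x \<in> {0..<c 1}" shows "0 \<le> D x"
proof (rule deriv_min_right)
  show "(G has_real_derivative D x) (at x within {x..<c 1})"
    by (rule has_field_derivative_subset[OF GD[OF x]]) (use x in auto)
  show "x < c 1" using x by auto
  show "\<forall>y\<in>{x<..<c 1}. G x \<le> G y" using x by (auto intro: G_mono_le)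
qed

lemma D_mono: assumes x: "x \<in> {0..<c 1}" and y: "y \<in> {0..<c 1}" and xy: "x \<le> y"
  shows "D x \<le> D y"
proof (cases "x = y")
  case False
  have 1: "G x + D x * (y - x) \<le> G y" by (rule tangent[OF Gconv GD[OF x] x y])
  have 2: "G y + D y * (x - y) \<le> G x" by (rule tangent[OF Gconv GD[OF y] y x])
  have "(D x - D y) * (y - x) \<le> 0" using 1 2 by (simp add: algebra_simps)
  moreover have "y - x > 0" using xy False by auto
  ultimately show ?thesis by (simp add: mult_le_0_iff)
qed simp

lemma shift_deriv:
  assumes m: "m \<in> {1..L}" and t: "0 \<le> t" "t < c m" and \<delta>: "0 < \<delta>"
    and rng: "\<forall>e\<in>{0..<\<delta>}. 0 \<le> t + s * e \<and> t + s * e < c m"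
  shows "((\<lambda>e. T (c m - (t + s * e))) has_real_derivative D (t + sft m) * s) (at 0 within {0..<\<delta>})"
proof -
  define g where "g e = t + s * e + sft m" for e
  have img: "g ` {0..<\<delta>} \<subseteq> {0..<c 1}"
    using rng sft_nonneg[OF m] by (auto simp: g_def sft_def)
  have "g 0 = t + sft m" by (simp add: g_def)
  have d2: "(G has_real_derivative D (t + sft m)) (at (g 0) within (g ` {0..<\<delta>}))"
    using has_field_derivative_subset[OF GD[OF pos_in[OF m t]] img] \<open>g 0 = t + sft m\<close> by simp
  have gd: "(g has_real_derivative s) (at 0 within {0..<\<delta>})"
    unfolding g_def by (auto intro!: derivative_eq_intros)
  have "((G \<circ> g) has_real_derivative D (t + sft m) * s) (at 0 within {0..<\<delta>})"
    by (rule DERIV_image_chain[OF d2 gd])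
  moreover have "G \<circ> g = (\<lambda>e. T (c m - (t + s * e)))"
    by (auto simp: g_def G_shift o_def add.assoc)
  ultimately show ?thesis by simp
qed

lemma foc:
  assumes l: "l \<in> {1..L}" and n: "n \<in> {1..L}"
    and ta: "0 \<le> ta" "ta < c l" and tb: "0 \<le> tb" "tb < c n" and \<delta>: "0 < \<delta>"
    and rl: "\<forall>e\<in>{0..<\<delta>}. 0 \<le> ta + (-1) * e \<and> ta + (-1) * e < c l"
    and rn: "\<forall>e\<in>{0..<\<delta>}. 0 \<le> tb + 1 * e \<and> tb + 1 * e < c n"
    and mn: "\<forall>e\<in>{0<..<\<delta>}. al * T (c l - ta) + an * T (c n - tb) \<le>
               (al - e) * T (c l - (ta + (-1) * e)) + (an + e) * T (c n - (tb + 1 * e))"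
  shows "G (ta + sft l) + al * D (ta + sft l) \<le> G (tb + sft n) + an * D (tb + sft n)"
proof -
  define \<psi> where "\<psi> e = (al - e) * T (c l - (ta + (-1) * e)) + (an + e) * T (c n - (tb + 1 * e))" for e
  note d1 = shift_deriv[OF l ta \<delta> rl]
  note d2 = shift_deriv[OF n tb \<delta> rn]
  have "(\<psi> has_real_derivative
      (-1) * T (c l - (ta + (-1) * 0)) + D (ta + sft l) * (-1) * (al - 0)
      + (1 * T (c n - (tb + 1 * 0)) + D (tb + sft n) * 1 * (an + 0))) (at 0 within {0..<\<delta>})"
    unfolding \<psi>_def
    by (intro DERIV_add DERIV_mult d1 d2 derivative_eq_intros) auto
  hence "(\<psi> has_real_derivative
      G (tb + sft n) + an * D (tb + sft n) - (G (ta + sft l) + al * D (ta + sft l))) (at 0 within {0..<\<delta>})"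
    by (simp add: G_shift algebra_simps)
  moreover have "\<forall>e\<in>{0<..<\<delta>}. \<psi> 0 \<le> \<psi> e" using mn by (simp add: \<psi>_def)
  ultimately have "0 \<le> G (tb + sft n) + an * D (tb + sft n) - (G (ta + sft l) + al * D (ta + sft l))"
    by (intro deriv_min_right[of \<psi> _ 0 \<delta>]) (use \<delta> in auto)
  thus ?thesis by simp
qed

lemma SO_fin:
  assumes opt: "is_social_opt T c N L r fs"
  shows "\<forall>m\<in>{1..L}. link_total N fs m < c m"
proof (rule ccontr)
  assume "\<not> ?thesis"
  then obtain m where m: "m \<in> {1..L}" "c m \<le> link_total N fs m" by force
  have fs: "feasible N L r fs" using opt by (simp add: is_social_opt_def)
  define C where "C = (\<Sum>l=1..L. c l)"
  define R where "R = (\<Sum>i=1..N. r i)"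
  have Rpos: "0 < R" unfolding R_def using rpos N by (intro sum_pos) auto
  have RC: "R < C" using Rcap by (simp add: R_def C_def)
  have Cpos: "0 < C" using Rpos RC by simp
  define p where "p i l = r i * c l / C" for i l
  have pf: "feasible N L r p"
    unfolding feasible_def is_strategy_def p_def
  proof safe
    fix i l assume "i \<in> {1..N}" "l \<in> {1..L}"
    hence "0 < r i" "0 < c l" using rpos cpos by auto
    thus "0 \<le> r i * c l / C" using Cpos by (auto intro!: divide_nonneg_pos)
  next
    fix i assume "i \<in> {1..N}"
    have "(\<Sum>l = 1..L. r i * c l / C) = r i * (\<Sum>l = 1..L. c l) / C"
      by (simp add: sum_distrib_left sum_divide_distrib)
    thus "(\<Sum>l = 1..L. r i * c l / C) = r i" using Cpos by (simp add: C_def)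
  qed
  have pt: "\<forall>l\<in>{1..L}. link_total N p l < c l"
  proof
    fix l assume l: "l \<in> {1..L}"
    have "link_total N p l = R * c l / C"
      unfolding link_total_def p_def R_def by (simp add: sum_distrib_right sum_divide_distrib)
    also have "\<dots> < c l" using RC Cpos cpos l by (simp add: divide_less_eq)
    finally show "link_total N p l < c l" .
  qed
  have "social_cost T c N L fs \<le> social_cost T c N L p" using opt pf by (simp add: is_social_opt_def)
  moreover have "social_cost T c N L p \<noteq> \<infinity>" using social_real[OF pf pt] by simp
  moreover have "social_cost T c N L fs = \<infinity>" by (rule social_inf[OF fs m])
  ultimately show False by simp
qed

lemma SO_foc:
  assumes opt: "is_social_opt T c N L r fs" and l: "l \<in> {1..L}" and n: "n \<in> {1..L}" and ln: "l \<noteq> n"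
    and pos: "0 < link_total N fs l"
  shows "G (link_total N fs l + sft l) + link_total N fs l * D (link_total N fs l + sft l)
       \<le> G (link_total N fs n + sft n) + link_total N fs n * D (link_total N fs n + sft n)"
proof -
  have fs: "feasible N L r fs" using opt by (simp add: is_social_opt_def)
  define t where "t = link_total N fs"
  have fin: "\<forall>m\<in>{1..L}. t m < c m" using SO_fin[OF opt] by (simp add: t_def)
  have t0: "\<forall>m\<in>{1..L}. 0 \<le> t m" using tot_nonneg[OF fs] by (simp add: t_def)
  have fl: "t l < c l" and fn: "t n < c n" using fin l n by auto
  obtain j where j: "j \<in> {1..N}" "0 < fs j l" using tot_pos_user[OF fs l pos] by auto
  have jl: "fs j l \<le> t l" using flow_le_tot[OF fs j(1) l] by (simp add: t_def)
  have jn: "0 \<le> fs j n" using fs j n by (auto simp: feasible_def is_strategy_def)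
  define \<delta> where "\<delta> = min (fs j l) (c n - t n)"
  have \<delta>: "0 < \<delta>" using j fin n by (auto simp: \<delta>_def)
  show ?thesis unfolding t_def[symmetric]
  proof (rule foc[OF l n _ _ _ _ \<delta>])
    show "0 \<le> t l" "t l < c l" "0 \<le> t n" "t n < c n" using t0 fin l n by auto
    show "\<forall>e\<in>{0..<\<delta>}. 0 \<le> t l + - 1 * e \<and> t l + - 1 * e < c l"
    proof
      fix e assume "e \<in> {0..<\<delta>}"
      moreover have "t l < c l" using fin l by auto
      ultimately show "0 \<le> t l + - 1 * e \<and> t l + - 1 * e < c l" using jl by (auto simp: \<delta>_def)
    qed
    show "\<forall>e\<in>{0..<\<delta>}. 0 \<le> t n + 1 * e \<and> t n + 1 * e < c n"
      using t0 n by (auto simp: \<delta>_def)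
    show "\<forall>e\<in>{0<..<\<delta>}. t l * T (c l - t l) + t n * T (c n - t n)
          \<le> (t l - e) * T (c l - (t l + - 1 * e)) + (t n + e) * T (c n - (t n + 1 * e))"
    proof
      fix e assume e: "e \<in> {0<..<\<delta>}"
      define g where "g = (fs j)(l := fs j l - e, n := fs j n + e)"
      have gs: "is_strategy L r j g"
        unfolding is_strategy_def
      proof
        show "\<forall>m\<in>{1..L}. 0 \<le> g m" using fs j e jn by (auto simp: g_def \<delta>_def feasible_def is_strategy_def)
        have "sum g {1..L} - sum (fs j) {1..L} = g l + g n - fs j l - fs j n"
          by (rule sum_two) (use l n ln in \<open>auto simp: g_def\<close>)
        moreover have "sum (fs j) {1..L} = r j" using fs j by (auto simp: feasible_def is_strategy_def)
        ultimately show "sum g {1..L} = r j" using ln by (simp add: g_def)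
      qed
      define f' where "f' = fs(j := g)"
      have f': "feasible N L r f'" unfolding f'_def by (rule upd_feasible[OF fs gs])
      have t': "link_total N f' m = t m - fs j m + g m" for m
        unfolding f'_def t_def by (rule upd_tot[OF j(1)])
      have t'l: "link_total N f' l = t l - e" using ln by (simp add: t' g_def)
      have t'n: "link_total N f' n = t n + e" using ln by (simp add: t' g_def)
      have t'o: "m \<noteq> l \<Longrightarrow> m \<noteq> n \<Longrightarrow> link_total N f' m = t m" for m by (simp add: t' g_def)
      have f'fin: "\<forall>m\<in>{1..L}. link_total N f' m < c m"
      proof
        fix m assume m: "m \<in> {1..L}"
        show "link_total N f' m < c m"
        proof (cases "m = l")
          case True thus ?thesis using fl e by (simp add: t'l)
        next
          case False
          show ?thesis
          proof (cases "m = n")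
            case True thus ?thesis using e by (simp add: t'n \<delta>_def)
          next
            case False2: False
            thus ?thesis using False fin m by (simp add: t'o)
          qed
        qed
      qed
      have "social_cost T c N L fs \<le> social_cost T c N L f'" using opt f' by (simp add: is_social_opt_def)
      hence le: "(\<Sum>m=1..L. t m * T (c m - t m)) \<le> (\<Sum>m=1..L. link_total N f' m * T (c m - link_total N f' m))"
        using social_real[OF fs] social_real[OF f' f'fin] fin by (simp add: t_def)
      have "(\<Sum>m=1..L. link_total N f' m * T (c m - link_total N f' m)) - (\<Sum>m=1..L. t m * T (c m - t m))
          = link_total N f' l * T (c l - link_total N f' l) + link_total N f' n * T (c n - link_total N f' n)
            - t l * T (c l - t l) - t n * T (c n - t n)"
        by (rule sum_two) (use l n ln t'o in auto)
      with le show "t l * T (c l - t l) + t n * T (c n - t n)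
          \<le> (t l - e) * T (c l - (t l + - 1 * e)) + (t n + e) * T (c n - (t n + 1 * e))"
        by (simp add: t'l t'n)
    qed
  qed
qed


lemma NE_fin:
  assumes ne: "is_nash T c N L r fh"
  shows "\<forall>m\<in>{1..L}. link_total N fh m < c m"
proof -
  have fh: "feasible N L r fh" using ne by (simp add: is_nash_def)
  have user: "link_total N fh m < c m" if i: "i \<in> {1..N}" and m: "m \<in> {1..L}" and pos: "0 < fh i m" for i m
  proof (rule ccontr)
    assume "\<not> ?thesis"
    hence inf: "user_cost T c N L fh i = \<infinity>" using user_inf[of m fh i] m pos by simp
    define o' where "o' m = link_total N fh m - fh i m" for m
    define w where "w m = max 0 (c m - o' m)" for m
    define W where "W = (\<Sum>m=1..L. w m)"
    have so: "(\<Sum>m=1..L. o' m) = (\<Sum>j=1..N. r j) - r i"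
      using tot_sum[OF fh] fh i unfolding o'_def
      by (simp add: sum_subtractf feasible_def is_strategy_def)
    have "(\<Sum>m=1..L. c m - o' m) \<le> W" unfolding W_def w_def by (intro sum_mono) auto
    hence Wgt: "r i < W" using so Rcap by (simp add: sum_subtractf)
    have ri: "0 < r i" using rpos i by auto
    have Wpos: "0 < W" using Wgt ri by simp
    define g where "g m = r i * w m / W" for m
    have gs: "is_strategy L r i g" unfolding is_strategy_def
    proof
      show "\<forall>m\<in>{1..L}. 0 \<le> g m" using ri Wpos by (auto simp: g_def w_def)
      have "(\<Sum>m=1..L. g m) = r i * W / W" unfolding g_def W_def
        by (simp add: sum_distrib_left sum_divide_distrib)
      thus "sum g {1..L} = r i" using Wpos by simp
    qed
    have "user_cost T c N L (fh(i := g)) i \<noteq> \<infinity>"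
      unfolding user_cost_def
    proof (subst sum_Pinfty, safe)
      fix m assume m: "m \<in> {1..L}"
        and eq: "ereal ((fh(i := g)) i m) * link_cost T c m (link_total N (fh(i := g)) m) = \<infinity>"
      have tt: "link_total N (fh(i := g)) m = o' m + g m" using upd_tot[OF i, of fh g m] by (simp add: o'_def)
      show False
      proof (cases "g m = 0")
        case True thus ?thesis using eq by (simp add: zero_ereal_def[symmetric])
      next
        case False
        hence wp: "0 < w m" using ri Wpos by (auto simp: g_def w_def)
        have "g m < w m" unfolding g_def using wp Wgt Wpos
          by (simp add: divide_less_eq mult_strict_right_mono)
        hence "o' m + g m < c m" using wp by (auto simp: w_def)
        thus ?thesis using eq tt m by (simp add: lc_fin)
      qed
    qed
    moreover have "user_cost T c N L fh i \<le> user_cost T c N L (fh(i := g)) i"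
      using ne i gs by (simp add: is_nash_def)
    ultimately show False using inf by simp
  qed
  show ?thesis
  proof
    fix m assume m: "m \<in> {1..L}"
    show "link_total N fh m < c m"
    proof (cases "0 < link_total N fh m")
      case True
      then obtain i where "i \<in> {1..N}" "0 < fh i m" using tot_pos_user[OF fh m] by auto
      thus ?thesis using user m by auto
    next
      case False thus ?thesis using cpos m by force
    qed
  qed
qed


lemma NE_foc:
  assumes ne: "is_nash T c N L r fh" and l: "l \<in> {1..L}" and n: "n \<in> {1..L}" and ln: "l \<noteq> n"
    and i: "i \<in> {1..N}" and pos: "0 < fh i n"
  shows "G (link_total N fh n + sft n) + fh i n * D (link_total N fh n + sft n)
       \<le> G (link_total N fh l + sft l) + fh i l * D (link_total N fh l + sft l)"
proof -
  have fh: "feasible N L r fh" using ne by (simp add: is_nash_def)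
  define t where "t = link_total N fh"
  have fin: "\<forall>m\<in>{1..L}. t m < c m" using NE_fin[OF ne] by (simp add: t_def)
  have t0: "\<forall>m\<in>{1..L}. 0 \<le> t m" using tot_nonneg[OF fh] by (simp add: t_def)
  have fl: "t l < c l" and fn: "t n < c n" using fin l n by auto
  have jn: "fh i n \<le> t n" using flow_le_tot[OF fh i n] by (simp add: t_def)
  have jl: "0 \<le> fh i l" using fh i l by (auto simp: feasible_def is_strategy_def)
  define \<delta> where "\<delta> = min (fh i n) (c l - t l)"
  have \<delta>: "0 < \<delta>" using pos fl by (auto simp: \<delta>_def)
  show ?thesis unfolding t_def[symmetric]
  proof (rule foc[OF n l _ _ _ _ \<delta>])
    show "0 \<le> t l" "t l < c l" "0 \<le> t n" "t n < c n" using t0 fl fn l n by auto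
    show "\<forall>e\<in>{0..<\<delta>}. 0 \<le> t n + - 1 * e \<and> t n + - 1 * e < c n"
    proof
      fix e assume "e \<in> {0..<\<delta>}"
      thus "0 \<le> t n + - 1 * e \<and> t n + - 1 * e < c n" using jn fn by (auto simp: \<delta>_def)
    qed
    show "\<forall>e\<in>{0..<\<delta>}. 0 \<le> t l + 1 * e \<and> t l + 1 * e < c l"
      using t0 l by (auto simp: \<delta>_def)
    show "\<forall>e\<in>{0<..<\<delta>}. fh i n * T (c n - t n) + fh i l * T (c l - t l)
          \<le> (fh i n - e) * T (c n - (t n + - 1 * e)) + (fh i l + e) * T (c l - (t l + 1 * e))"
    proof
      fix e assume e: "e \<in> {0<..<\<delta>}"
      define g where "g = (fh i)(n := fh i n - e, l := fh i l + e)"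
      have gs: "is_strategy L r i g"
        unfolding is_strategy_def
      proof
        show "\<forall>m\<in>{1..L}. 0 \<le> g m" using fh i e jl by (auto simp: g_def \<delta>_def feasible_def is_strategy_def)
        have "sum g {1..L} - sum (fh i) {1..L} = g l + g n - fh i l - fh i n"
          by (rule sum_two) (use l n ln in \<open>auto simp: g_def\<close>)
        moreover have "sum (fh i) {1..L} = r i" using fh i by (auto simp: feasible_def is_strategy_def)
        ultimately show "sum g {1..L} = r i" using ln by (simp add: g_def)
      qed
      define f' where "f' = fh(i := g)"
      have f': "feasible N L r f'" unfolding f'_def by (rule upd_feasible[OF fh gs])
      have t': "link_total N f' m = t m - fh i m + g m" for m
        unfolding f'_def t_def by (rule upd_tot[OF i])
      have t'l: "link_total N f' l = t l + e" using ln by (simp add: t' g_def)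
      have t'n: "link_total N f' n = t n - e" using ln by (simp add: t' g_def)
      have t'o: "m \<noteq> l \<Longrightarrow> m \<noteq> n \<Longrightarrow> link_total N f' m = t m" for m by (simp add: t' g_def)
      have f'fin: "\<forall>m\<in>{1..L}. link_total N f' m < c m"
      proof
        fix m assume m: "m \<in> {1..L}"
        show "link_total N f' m < c m"
        proof (cases "m = l")
          case True thus ?thesis using e by (simp add: t'l \<delta>_def)
        next
          case False
          show ?thesis
          proof (cases "m = n")
            case True thus ?thesis using fn e by (simp add: t'n)
          next
            case False2: False
            thus ?thesis using False fin m by (simp add: t'o)
          qed
        qed
      qed
      have "user_cost T c N L fh i \<le> user_cost T c N L f' i" using ne i gs by (simp add: is_nash_def f'_def)
      hence le: "(\<Sum>m=1..L. fh i m * T (c m - t m)) \<le> (\<Sum>m=1..L. g m * T (c m - link_total N f' m))"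
        using user_real[OF fh] user_real[OF f' f'fin] fin by (simp add: t_def f'_def)
      have "(\<Sum>m=1..L. g m * T (c m - link_total N f' m)) - (\<Sum>m=1..L. fh i m * T (c m - t m))
          = g n * T (c n - link_total N f' n) + g l * T (c l - link_total N f' l)
            - fh i n * T (c n - t n) - fh i l * T (c l - t l)"
        by (rule sum_two) (use l n ln t'o in \<open>auto simp: g_def\<close>)
      with le show "fh i n * T (c n - t n) + fh i l * T (c l - t l)
          \<le> (fh i n - e) * T (c n - (t n + - 1 * e)) + (fh i l + e) * T (c l - (t l + 1 * e))"
        using ln by (simp add: t'l t'n g_def)
    qed
  qed
qed


lemma no_cross:
  assumes ne: "is_nash T c N L r fh" and opt: "is_social_opt T c N L r fs"
    and l: "l \<in> {1..L}" and n: "n \<in> {1..L}" and ln: "l < n"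
    and h1: "link_total N fh l < link_total N fs l" and h2: "link_total N fs n < link_total N fh n"
  shows False
proof -
  have fh: "feasible N L r fh" using ne by (simp add: is_nash_def)
  have fs: "feasible N L r fs" using opt by (simp add: is_social_opt_def)
  define a where "a = link_total N fs l" define a' where "a' = link_total N fh l"
  define b where "b = link_total N fs n" define b' where "b' = link_total N fh n"
  have a0: "0 \<le> a'" "0 \<le> b" using tot_nonneg[OF fh l] tot_nonneg[OF fs n] by (auto simp: a'_def b_def)
  have aa: "a' < a" and bb: "b < b'" using h1 h2 by (auto simp: a_def a'_def b_def b'_def)
  have ac: "a < c l" "a' < c l" "b < c n" "b' < c n"
    using SO_fin[OF opt] NE_fin[OF ne] l n by (auto simp: a_def a'_def b_def b'_def)
  define pa where "pa = a + sft l" define pa' where "pa' = a' + sft l"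
  define pb where "pb = b + sft n" define pb' where "pb' = b' + sft n"
  have P: "pa \<in> {0..<c 1}" "pa' \<in> {0..<c 1}" "pb \<in> {0..<c 1}" "pb' \<in> {0..<c 1}"
    unfolding pa_def pa'_def pb_def pb'_def using pos_in l n ac a0 aa bb by auto
  have clcn: "c n \<le> c l" using cord l n ln by auto
  have so: "G pa + a * D pa \<le> G pb + b * D pb"
    using SO_foc[OF opt l n _] ln h1 a0 by (auto simp: pa_def pb_def a_def b_def a'_def)
  define S where "S = {i\<in>{1..N}. 0 < fh i n}"
  have Sfin: "finite S" by (simp add: S_def)
  have Sne: "S \<noteq> {}" using tot_pos_user[OF fh n] bb a0 by (auto simp: S_def b'_def)
  have k1: "1 \<le> real (card S)" using Sfin Sne by (simp add: Suc_le_eq card_gt_0_iff)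
  have Ssub: "S \<subseteq> {1..N}" by (auto simp: S_def)
  have sn: "(\<Sum>i\<in>S. fh i n) = b'"
    unfolding b'_def link_total_def
  proof (rule sum.mono_neutral_left)
    show "\<forall>i\<in>{1..N} - S. fh i n = 0"
      using fh n by (force simp: S_def feasible_def is_strategy_def)
  qed (use Ssub in auto)
  have sl: "(\<Sum>i\<in>S. fh i l) \<le> a'"
    unfolding a'_def link_total_def
    by (rule sum_mono2) (use Ssub fh l in \<open>auto simp: feasible_def is_strategy_def\<close>)
  have "(\<Sum>i\<in>S. G pb' + fh i n * D pb') \<le> (\<Sum>i\<in>S. G pa' + fh i l * D pa')"
  proof (rule sum_mono)
    fix i assume "i \<in> S"
    hence "i \<in> {1..N}" "0 < fh i n" by (auto simp: S_def)
    from NE_foc[OF ne l n _ this] ln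
    show "G pb' + fh i n * D pb' \<le> G pa' + fh i l * D pa'"
      by (simp add: pa'_def pb'_def a'_def b'_def)
  qed
  hence ne2: "card S * G pb' + b' * D pb' \<le> card S * G pa' + (\<Sum>i\<in>S. fh i l) * D pa'"
    by (simp add: sum.distrib sum_distrib_right[symmetric] sn)
  have Dpa': "0 \<le> D pa'" and Dpb: "0 \<le> D pb" using D_nonneg P by auto
  have m1: "(\<Sum>i\<in>S. fh i l) * D pa' \<le> a' * D pa'" by (rule mult_right_mono[OF sl Dpa'])
  show False
  proof (cases "pa \<le> pb")
    case True
    have g1: "G pa \<le> G pb" using G_mono_le[OF P(1) P(3) True] .
    have g2: "G pb < G pb'" using G_mono_lt[OF P(3) P(4)] bb by (simp add: pb_def pb'_def)
    have g3: "G pa' < G pa" using G_mono_lt[OF P(2) P(1)] aa by (simp add: pa_def pa'_def)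
    have d1: "D pa' \<le> D pa" using D_mono[OF P(2) P(1)] aa by (simp add: pa_def pa'_def)
    have d2: "D pb \<le> D pb'" using D_mono[OF P(3) P(4)] bb by (simp add: pb_def pb'_def)
    have m2: "a' * D pa' \<le> a * D pa" by (rule mult_mono) (use aa d1 a0 Dpa' in auto)
    have m3: "b * D pb \<le> b' * D pb'" by (rule mult_mono) (use bb d2 a0 Dpb in auto)
    have X: "0 < G pb' - G pa'" using g1 g2 g3 by simp
    have "G pb' - G pa' \<le> card S * (G pb' - G pa')"
      using mult_right_mono[OF k1, of "G pb' - G pa'"] X by simp
    thus False using ne2 m1 m2 m3 so g1 g2 g3 by (simp add: algebra_simps)
  next
    case False
    have g: "G pb < G pa" using G_mono_lt[OF P(3) P(1)] False by simp
    have d: "D pb \<le> D pa" using D_mono[OF P(3) P(1)] False by simp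
    have "b \<le> a" using False clcn by (simp add: pa_def pb_def sft_def)
    have "b * D pb \<le> a * D pa" by (rule mult_mono) (use \<open>b \<le> a\<close> d a0 Dpb aa in auto)
    thus False using so g by simp
  qed
qed


lemma cost_le:
  assumes m: "m \<in> {1..L}" and inc: "strict_mono_on {0..<c m} (\<lambda>x. T (c m - x))"
    and x: "0 \<le> x" and xy: "x \<le> y" and y: "y < c m"
  shows "link_cost T c m x \<le> link_cost T c m y"
proof -
  have "T (c m - x) \<le> T (c m - y)"
    using strict_mono_on_leD[OF inc, of x y] x xy y by auto
  thus ?thesis using xy y by (simp add: link_cost_def)
qed

lemma final:
  assumes ne: "is_nash T c N L r fh" and opt: "is_social_opt T c N L r fs"
    and Tincr: "\<forall>l\<in>{1..L}. strict_mono_on {0..<c l} (\<lambda>x. T (c l - x))"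
  shows "\<exists>M\<in>{1..L}.
           (\<forall>l\<in>{1..L}. l \<le> M \<longrightarrow>
              link_cost T c l (link_total N fs l) \<le> link_cost T c l (link_total N fh l))
         \<and> (\<forall>n\<in>{1..L}. M < n \<longrightarrow>
              link_cost T c n (link_total N fh n) \<le> link_cost T c n (link_total N fs n))"
proof -
  have fh: "feasible N L r fh" using ne by (simp add: is_nash_def)
  have fs: "feasible N L r fs" using opt by (simp add: is_social_opt_def)
  define tS where "tS = link_total N fs" define tH where "tH = link_total N fh"
  have S0: "\<forall>m\<in>{1..L}. 0 \<le> tS m" using tot_nonneg[OF fs] by (simp add: tS_def)
  have H0: "\<forall>m\<in>{1..L}. 0 \<le> tH m" using tot_nonneg[OF fh] by (simp add: tH_def)
  have Sc: "\<forall>m\<in>{1..L}. tS m < c m" using SO_fin[OF opt] by (simp add: tS_def)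
  have Hc: "\<forall>m\<in>{1..L}. tH m < c m" using NE_fin[OF ne] by (simp add: tH_def)
  have eqs: "sum tS {1..L} = sum tH {1..L}" using tot_sum[OF fs] tot_sum[OF fh] by (simp add: tS_def tH_def)
  have c1: "link_cost T c m (tS m) \<le> link_cost T c m (tH m)" if "m \<in> {1..L}" "tS m \<le> tH m" for m
    using cost_le[of m "tS m" "tH m"] that Tincr S0 Hc by auto
  have c2: "link_cost T c m (tH m) \<le> link_cost T c m (tS m)" if "m \<in> {1..L}" "tH m \<le> tS m" for m
    using cost_le[of m "tH m" "tS m"] that Tincr H0 Sc by auto
  define A where "A = {l\<in>{1..L}. tS l < tH l}"
  have Afin: "finite A" by (simp add: A_def)
  show ?thesis unfolding tS_def[symmetric] tH_def[symmetric]
  proof (cases "A = {}")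
    case True
    hence le: "\<forall>m\<in>{1..L}. tH m \<le> tS m" by (auto simp: A_def not_less)
    have "sum (\<lambda>m. tS m - tH m) {1..L} = 0" using eqs by (simp add: sum_subtractf)
    hence "\<forall>m\<in>{1..L}. tS m - tH m = 0" using le by (subst (asm) sum_nonneg_eq_0_iff) auto
    hence "\<forall>m\<in>{1..L}. tS m = tH m" by auto
    thus "\<exists>M\<in>{1..L}. (\<forall>l\<in>{1..L}. l \<le> M \<longrightarrow> link_cost T c l (tS l) \<le> link_cost T c l (tH l))
         \<and> (\<forall>n\<in>{1..L}. M < n \<longrightarrow> link_cost T c n (tH n) \<le> link_cost T c n (tS n))"
      using c1 c2 one_in by (intro bexI[of _ 1]) auto
  next
    case False
    define M where "M = Max A"
    have MA: "M \<in> A" using Max_in[OF Afin False] by (simp add: M_def)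
    have Mmax: "\<forall>l\<in>A. l \<le> M" using Max_ge[OF Afin] by (simp add: M_def)
    have M: "M \<in> {1..L}" "tS M < tH M" using MA by (auto simp: A_def)
    show "\<exists>M\<in>{1..L}. (\<forall>l\<in>{1..L}. l \<le> M \<longrightarrow> link_cost T c l (tS l) \<le> link_cost T c l (tH l))
         \<and> (\<forall>n\<in>{1..L}. M < n \<longrightarrow> link_cost T c n (tH n) \<le> link_cost T c n (tS n))"
    proof (intro bexI[OF _ M(1)] conjI ballI impI)
      fix l assume l: "l \<in> {1..L}" "l \<le> M"
      show "link_cost T c l (tS l) \<le> link_cost T c l (tH l)"
      proof (cases "tS l \<le> tH l")
        case True thus ?thesis using c1 l by auto
      next
        case False
        hence "l \<noteq> M" using M by auto
        hence "l < M" using l by auto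
        with no_cross[OF ne opt l(1) M(1)] False M show ?thesis by (simp add: tS_def tH_def)
      qed
    next
      fix n assume n: "n \<in> {1..L}" "M < n"
      hence "n \<notin> A" using Mmax by force
      hence "tH n \<le> tS n" using n by (auto simp: A_def)
      thus "link_cost T c n (tH n) \<le> link_cost T c n (tS n)" using c2 n by auto
    qed
  qed
qed

end

theorem lemma2p3:
  fixes N L :: nat and c r :: "nat \<Rightarrow> real" and T :: "real \<Rightarrow> real"
    and fh fs :: "nat \<Rightarrow> nat \<Rightarrow> real"
  assumes N: "N \<ge> 1" and L: "L \<ge> 1"
    and cpos: "\<forall>l\<in>{1..L}. 0 < c l"
    and cord: "\<forall>l\<in>{1..L}. \<forall>m\<in>{1..L}. l \<le> m \<longrightarrow> c m \<le> c l"
    and rpos: "\<forall>i\<in>{1..N}. 0 < r i"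
    and Rcap: "(\<Sum>i=1..N. r i) < (\<Sum>l=1..L. c l)"
    and Tnonneg: "\<forall>l\<in>{1..L}. \<forall>x\<in>{0..<c l}. 0 \<le> T (c l - x)"
    and Tincr: "\<forall>l\<in>{1..L}. strict_mono_on {0..<c l} (\<lambda>x. T (c l - x))"
    and Tconv: "\<forall>l\<in>{1..L}. convex_on {0..<c l} (\<lambda>x. T (c l - x))"
    and TC1: "\<forall>l\<in>{1..L}. \<exists>D. (\<forall>x\<in>{0..<c l}.
                 ((\<lambda>x. T (c l - x)) has_real_derivative D x) (at x within {0..<c l}))
               \<and> continuous_on {0..<c l} D"
    and NE: "is_nash T c N L r fh"
    and NE_unique: "\<forall>g. is_nash T c N L r g \<longrightarrow> (\<forall>i\<in>{1..N}. \<forall>l\<in>{1..L}. g i l = fh i l)"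
    and OPT: "is_social_opt T c N L r fs"
  shows "\<exists>M\<in>{1..L}.
           (\<forall>l\<in>{1..L}. l \<le> M \<longrightarrow>
              link_cost T c l (link_total N fs l) \<le> link_cost T c l (link_total N fh l))
         \<and> (\<forall>n\<in>{1..L}. M < n \<longrightarrow>
              link_cost T c n (link_total N fh n) \<le> link_cost T c n (link_total N fs n))"
proof -
  obtain D where D: "\<forall>x\<in>{0..<c 1}. ((\<lambda>x. T (c 1 - x)) has_real_derivative D x) (at x within {0..<c 1})"
    using TC1 L by force
  have one: "(1::nat) \<in> {1..L}" using L by auto
  interpret rg N L c r T D
    using N L cpos cord rpos Rcap Tnonneg D Tconv Tincr one by unfold_locales auto
  show ?thesis by (rule final[OF NE OPT Tincr])
qed

end
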